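(* For every integer $n\geq 5$, there is a graph homomorphism $h: M(G_{n-1}) \to G_n$. In particular, $\chi(G_n)\geq n-2$.
   Context: Let $[n]=\{1,\dots,n\}$. A $2$-subset $\{a,b\}$ of $[n]$ with $a<b$ is called stable if $b \neq a+1$ and $\{a,b\}\neq\{1,n\}$; it is written $ab$. For $n\ge 4$, the graph $G_n$ has as vertex set all stable $2$-subsets of $[n]$; two vertices $ab$ ($a<b$) and $cd$ ($c<d$) with $a<c$ are adjacent iff $\{a,b\}\cap\{c,d\}=\emptyset$ and either $a<c<b<d$, or $1<a<c<d<b$. For a graph $G=(V,E)$, the Mycielskian $M(G)$ has vertex set $V\cup\{\bar u : u\in V\}\cup\{*\}$ (with $\bar u$ new vertices called clones and $*$ a new vertex), and edges $\{u,v\}$ and $\{u,\bar v\}$ for every $\{u,v\}\in E$, and $\{\bar u,*\}$ for every $u\in V$. A homomorphism is a map on vertices sending edges to edges. $\chi$ denotes chromatic number. *)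

theory Defs
  imports Main
begin

text \<open>Simple graphs are given by a vertex set V and a symmetric edge relation E
  (only its restriction to V matters).\<close>

definition graph_hom ::
  "'a set \<Rightarrow> ('a \<Rightarrow> 'a \<Rightarrow> bool) \<Rightarrow> 'b set \<Rightarrow> ('b \<Rightarrow> 'b \<Rightarrow> bool) \<Rightarrow> ('a \<Rightarrow> 'b) \<Rightarrow> bool" where
  "graph_hom V1 E1 V2 E2 h \<longleftrightarrow>
     (\<forall>x\<in>V1. h x \<in> V2) \<and> (\<forall>x\<in>V1. \<forall>y\<in>V1. E1 x y \<longrightarrow> E2 (h x) (h y))"

definition proper_colouring :: "'a set \<Rightarrow> ('a \<Rightarrow> 'a \<Rightarrow> bool) \<Rightarrow> nat \<Rightarrow> ('a \<Rightarrow> nat) \<Rightarrow> bool" where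
  "proper_colouring V E k c \<longleftrightarrow>
     (\<forall>x\<in>V. c x < k) \<and> (\<forall>x\<in>V. \<forall>y\<in>V. E x y \<longrightarrow> c x \<noteq> c y)"

definition chromatic_number :: "'a set \<Rightarrow> ('a \<Rightarrow> 'a \<Rightarrow> bool) \<Rightarrow> nat" where
  "chromatic_number V E = (LEAST k. \<exists>c. proper_colouring V E k c)"

text \<open>Stable 2-subsets {a,b}, a<b, of [n], encoded as the pair (a,b).\<close>
definition stable :: "nat \<Rightarrow> nat \<times> nat \<Rightarrow> bool" where
  "stable n p \<longleftrightarrow> (case p of (a, b) \<Rightarrow>
     1 \<le> a \<and> a < b \<and> b \<le> n \<and> b \<noteq> a + 1 \<and> \<not> (a = 1 \<and> b = n))"

definition G_verts :: "nat \<Rightarrow> (nat \<times> nat) set" where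
  "G_verts n = {p. stable n p}"

definition cross :: "nat \<times> nat \<Rightarrow> nat \<times> nat \<Rightarrow> bool" where
  "cross p q \<longleftrightarrow> (case p of (a, b) \<Rightarrow> case q of (c, d) \<Rightarrow>
     a < c \<and> {a, b} \<inter> {c, d} = {} \<and>
     ((a < c \<and> c < b \<and> b < d) \<or> (1 < a \<and> a < c \<and> c < d \<and> d < b)))"

definition G_adj :: "nat \<Rightarrow> nat \<times> nat \<Rightarrow> nat \<times> nat \<Rightarrow> bool" where
  "G_adj n p q \<longleftrightarrow> p \<in> G_verts n \<and> q \<in> G_verts n \<and> (cross p q \<or> cross q p)"

datatype 'a myc = Orig 'a | Clone 'a | Star

definition myc_verts :: "'a set \<Rightarrow> 'a myc set" where
  "myc_verts V = Orig ` V \<union> Clone ` V \<union> {Star}"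

fun myc_adj :: "('a \<Rightarrow> 'a \<Rightarrow> bool) \<Rightarrow> 'a myc \<Rightarrow> 'a myc \<Rightarrow> bool" where
  "myc_adj E (Orig u) (Orig v) = E u v"
| "myc_adj E (Orig u) (Clone v) = E u v"
| "myc_adj E (Clone u) (Orig v) = E u v"
| "myc_adj E (Clone u) Star = True"
| "myc_adj E Star (Clone u) = True"
| "myc_adj E _ _ = False"

end

theory Submission
  imports Defs
begin

definition cl :: "nat \<Rightarrow> nat \<times> nat \<Rightarrow> nat \<times> nat" where
  "cl n p = (if fst p = 1 then (snd p, n) else (fst p, n))"

fun hh :: "nat \<Rightarrow> (nat \<times> nat) myc \<Rightarrow> nat \<times> nat" where
  "hh n (Orig p) = p"
| "hh n (Clone p) = cl n p"
| "hh n Star = (1, n - 1)"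

lemma adj_sym: "G_adj n p q = G_adj n q p"
  unfolding G_adj_def by blast

lemma vert_mono: "n \<ge> 5 \<Longrightarrow> p \<in> G_verts (n - 1) \<Longrightarrow> p \<in> G_verts n"
  unfolding G_verts_def stable_def by (cases p) auto

lemma adj_mono: "n \<ge> 5 \<Longrightarrow> G_adj (n - 1) p q \<Longrightarrow> G_adj n p q"
  unfolding G_adj_def using vert_mono by blast

lemma cl_vert: "n \<ge> 5 \<Longrightarrow> p \<in> G_verts (n - 1) \<Longrightarrow> cl n p \<in> G_verts n"
  unfolding G_verts_def stable_def cl_def by (cases p) auto

lemma cl_star: "n \<ge> 5 \<Longrightarrow> p \<in> G_verts (n - 1) \<Longrightarrow> G_adj n (cl n p) (1, n - 1)"
  using cl_vert[of n p]
  unfolding G_adj_def apply (simp add: G_verts_def stable_def cl_def cross_def)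
  by (cases p) auto

lemma cross_eq: "cross (a,b) (c,d) = (a < c \<and> a \<noteq> d \<and> b \<noteq> c \<and> b \<noteq> d \<and> ((c<b \<and> b<d) \<or> (1<a \<and> c<d \<and> d<b)))"
  unfolding cross_def by auto

lemma stable_eq: "stable n (a,b) = (1 \<le> a \<and> a < b \<and> b \<le> n \<and> b \<noteq> a + 1 \<and> \<not> (a = 1 \<and> b = n))"
  unfolding stable_def by simp

lemma ar1: "\<lbrakk>(x::nat) \<ge> 1; x < y; y \<le> n - 1; y \<noteq> x+1; \<not>(x=1 \<and> y = n - 1);
  c \<ge> 1; c < d; d \<le> n - 1; d \<noteq> c+1; \<not>(c=1 \<and> d = n - 1); c = 1; n \<ge> 5;
  (x < c \<and> x \<noteq> d \<and> y \<noteq> c \<and> y \<noteq> d \<and> ((c<y \<and> y<d) \<or> (1<x \<and> c < d \<and> d<y))) \<or>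
  (c < x \<and> c \<noteq> y \<and> d \<noteq> x \<and> d \<noteq> y \<and> ((x<d \<and> d<y) \<or> (1<c \<and> x < y \<and> y<d)))\<rbrakk> \<Longrightarrow>
  (d < x \<and> d \<noteq> y \<and> n \<noteq> x \<and> n \<noteq> y \<and> ((x<n \<and> n<y) \<or> (1<d \<and> x < y \<and> y<n))) \<or>
  (x < d \<and> x \<noteq> n \<and> y \<noteq> d \<and> y \<noteq> n \<and> ((d<y \<and> y<n) \<or> (1<x \<and> d < n \<and> n<y)))"
  by (elim disjE conjE; simp; linarith)
lemma ar2: "\<lbrakk>(x::nat) \<ge> 1; x < y; y \<le> n - 1; y \<noteq> x+1; \<not>(x=1 \<and> y = n - 1);
  c \<ge> 1; c < d; d \<le> n - 1; d \<noteq> c+1; \<not>(c=1 \<and> d = n - 1); c \<noteq> 1; n \<ge> 5;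
  (x < c \<and> x \<noteq> d \<and> y \<noteq> c \<and> y \<noteq> d \<and> ((c<y \<and> y<d) \<or> (1<x \<and> c < d \<and> d<y))) \<or>
  (c < x \<and> c \<noteq> y \<and> d \<noteq> x \<and> d \<noteq> y \<and> ((x<d \<and> d<y) \<or> (1<c \<and> x < y \<and> y<d)))\<rbrakk> \<Longrightarrow>
  (c < x \<and> c \<noteq> y \<and> n \<noteq> x \<and> n \<noteq> y \<and> ((x<n \<and> n<y) \<or> (1<c \<and> x < y \<and> y<n))) \<or>
  (x < c \<and> x \<noteq> n \<and> y \<noteq> c \<and> y \<noteq> n \<and> ((c<y \<and> y<n) \<or> (1<x \<and> c < n \<and> n<y)))"
  by (elim disjE conjE; simp; linarith)
lemma cl_adj: "n \<ge> 5 \<Longrightarrow> G_adj (n - 1) u v \<Longrightarrow> G_adj n (cl n v) u"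
proof -
  assume n: "n \<ge> 5" and a: "G_adj (n - 1) u v"
  then have uv: "u \<in> G_verts (n - 1)" "v \<in> G_verts (n - 1)" and c: "cross u v \<or> cross v u"
    unfolding G_adj_def by auto
  have "cl n v \<in> G_verts n" "u \<in> G_verts n" using uv n cl_vert vert_mono by auto
  moreover have "cross (cl n v) u \<or> cross u (cl n v)"
  proof -
    obtain x y where xy: "u = (x,y)" by (cases u)
    obtain c d where cd: "v = (c,d)" by (cases v)
    have su: "stable (n-1) (x,y)" and sv: "stable (n-1) (c,d)" using uv xy cd unfolding G_verts_def by auto
    show ?thesis
    proof (cases "c = 1")
      case True
      have "cross (d,n) (x,y) \<or> cross (x,y) (d,n)"
        using ar1[of x y n c d] su sv c True n unfolding xy cd cross_eq stable_eq by blast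
      then show ?thesis using True unfolding xy cd cl_def by simp
    next
      case False
      have "cross (c,n) (x,y) \<or> cross (x,y) (c,n)"
        using ar2[of x y n c d] su sv c False n unfolding xy cd cross_eq stable_eq by blast
      then show ?thesis using False unfolding xy cd cl_def by simp
    qed
  qed
  ultimately show ?thesis unfolding G_adj_def by blast
qed

lemma hom: "n \<ge> 5 \<Longrightarrow> graph_hom (myc_verts (G_verts (n - 1))) (myc_adj (G_adj (n - 1)))
                          (G_verts n) (G_adj n) (hh n)"
  unfolding graph_hom_def
proof (intro conjI ballI impI)
  fix x assume n: "n \<ge> 5" and x: "x \<in> myc_verts (G_verts (n - 1))"
  have s: "(1, n - 1) \<in> G_verts n" using n unfolding G_verts_def stable_def by auto
  show "hh n x \<in> G_verts n" using x n s vert_mono cl_vert unfolding myc_verts_def by auto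
next
  fix x y assume n: "n \<ge> 5" and x: "x \<in> myc_verts (G_verts (n - 1))"
    and y: "y \<in> myc_verts (G_verts (n - 1))" and e: "myc_adj (G_adj (n - 1)) x y"
  have s: "(1, n - 1) \<in> G_verts n" using n unfolding G_verts_def stable_def by auto
  show "G_adj n (hh n x) (hh n y)"
  proof (cases x)
    case (Orig u)
    then have u: "u \<in> G_verts (n - 1)" using x unfolding myc_verts_def by auto
    show ?thesis
    proof (cases y)
      case (Orig v) then show ?thesis using \<open>x = Orig u\<close> e n adj_mono by auto
    next
      case (Clone v) then show ?thesis using \<open>x = Orig u\<close> e n cl_adj adj_sym by auto
    next
      case Star then show ?thesis using \<open>x = Orig u\<close> e by auto
    qed
  next
    case (Clone u)
    then have u: "u \<in> G_verts (n - 1)" using x unfolding myc_verts_def by auto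
    show ?thesis
    proof (cases y)
      case (Orig v) then show ?thesis using \<open>x = Clone u\<close> e n cl_adj adj_sym by auto
    next
      case (Clone v) then show ?thesis using \<open>x = Clone u\<close> e by auto
    next
      case Star then show ?thesis using \<open>x = Clone u\<close> e n cl_star u by auto
    qed
  next
    case Star
    show ?thesis
    proof (cases y)
      case (Orig v) then show ?thesis using \<open>x = Star\<close> e by auto
    next
      case (Clone v)
      then have v: "v \<in> G_verts (n - 1)" using y unfolding myc_verts_def by auto
      then show ?thesis using \<open>x = Star\<close> Clone n cl_star adj_sym by auto
    next
      case Star then show ?thesis using \<open>x = Star\<close> e by auto
    qed
  qed
qed

lemma hom_col:
  assumes "graph_hom V1 E1 V2 E2 h" "proper_colouring V2 E2 k c"
  shows "proper_colouring V1 E1 k (c \<circ> h)"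
  using assms unfolding graph_hom_def proper_colouring_def by auto

lemma myc_col:
  assumes p: "proper_colouring (myc_verts V) (myc_adj E) k c"
  shows "proper_colouring V E (k - 1)
     (\<lambda>x. let d = (if c (Orig x) = c Star then c (Clone x) else c (Orig x))
            in if d > c Star then d - 1 else d)"
proof -
  have sV: "Star \<in> myc_verts V" unfolding myc_verts_def by auto
  have oV: "Orig x \<in> myc_verts V" "Clone x \<in> myc_verts V" if "x \<in> V" for x
    using that unfolding myc_verts_def by auto
  have lt: "c z < k" if "z \<in> myc_verts V" for z using p that unfolding proper_colouring_def by auto
  have ne: "c z \<noteq> c w" if "z \<in> myc_verts V" "w \<in> myc_verts V" "myc_adj E z w" for z w
    using p that unfolding proper_colouring_def by auto
  define d where "d x = (if c (Orig x) = c Star then c (Clone x) else c (Orig x))" for x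
  have dS: "d x \<noteq> c Star" if "x \<in> V" for x
    using ne[OF oV(2)[OF that] sV] unfolding d_def by auto
  have dk: "d x < k" if "x \<in> V" for x using lt oV[OF that] unfolding d_def by auto
  have dE: "d x \<noteq> d y" if "x \<in> V" "y \<in> V" "E x y" for x y
  proof -
    have 1: "c (Orig x) \<noteq> c (Orig y)" using ne[OF oV(1)[OF that(1)] oV(1)[OF that(2)]] that(3) by simp
    have 2: "c (Clone x) \<noteq> c (Orig y)" using ne[OF oV(2)[OF that(1)] oV(1)[OF that(2)]] that(3) by simp
    have 3: "c (Orig x) \<noteq> c (Clone y)" using ne[OF oV(1)[OF that(1)] oV(2)[OF that(2)]] that(3) by simp
    show ?thesis using 1 2 3 unfolding d_def by auto
  qed
  have sk: "c Star < k" using lt sV by blast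
  show ?thesis unfolding proper_colouring_def Let_def d_def[symmetric]
  proof (intro conjI ballI impI)
    fix x assume x: "x \<in> V"
    show "(if c Star < d x then d x - 1 else d x) < k - 1"
      using dS[OF x] dk[OF x] sk by auto
  next
    fix x y assume xy: "x \<in> V" "y \<in> V" "E x y"
    have "d x \<noteq> c Star" "d y \<noteq> c Star" "d x \<noteq> d y" using dS dE xy by auto
    then show "(if c Star < d x then d x - 1 else d x) \<noteq> (if c Star < d y then d y - 1 else d y)"
      by (auto split: if_splits)
  qed
qed

lemma base_col: "proper_colouring (G_verts 4) (G_adj 4) k c \<Longrightarrow> 2 \<le> k"
proof -
  assume p: "proper_colouring (G_verts 4) (G_adj 4) k c"
  have v: "(1,3) \<in> G_verts 4" "(2,4) \<in> G_verts 4" unfolding G_verts_def stable_def by auto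
  have "G_adj 4 (1,3) (2,4)" using v unfolding G_adj_def cross_def by auto
  then have "c (1,3) \<noteq> c (2,4)" "c (1,3) < k" "c (2,4) < k" using p v unfolding proper_colouring_def by auto
  then show ?thesis by linarith
qed

lemma main_col: "n \<ge> 4 \<Longrightarrow> proper_colouring (G_verts n) (G_adj n) k c \<Longrightarrow> n - 2 \<le> k"
proof (induction n arbitrary: k c rule: dec_induct)
  case base
  then show ?case using base_col by simp
next
  case (step m)
  have "Suc m \<ge> 5" using step.hyps by simp
  from hom[OF this] have "graph_hom (myc_verts (G_verts m)) (myc_adj (G_adj m)) (G_verts (Suc m)) (G_adj (Suc m)) (hh (Suc m))" by simp
  from myc_col[OF hom_col[OF this step.prems]]
  have "\<exists>c'. proper_colouring (G_verts m) (G_adj m) (k - 1) c'" by blast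
  then obtain c' where "proper_colouring (G_verts m) (G_adj m) (k - 1) c'" by blast
  from step.IH[OF this] step.hyps show ?case by simp
qed

lemma ex_col: "proper_colouring (G_verts n) (G_adj n) ((n+1)*(n+1)) (\<lambda>(a,b). a*(n+1)+b)"
  unfolding proper_colouring_def
proof (intro conjI ballI impI)
  fix x assume "x \<in> G_verts n"
  then obtain a b where x: "x = (a,b)" "a < b" "b \<le> n" unfolding G_verts_def stable_def by auto
  have "a*(n+1)+b < (a+1)*(n+1)" using x by simp
  also have "... \<le> n*(n+1)" using x by (intro mult_right_mono) auto
  also have "... < (n+1)*(n+1)" by simp
  finally show "(case x of (a, b) \<Rightarrow> a * (n + 1) + b) < (n + 1) * (n + 1)" using x by simp
next
  fix x y assume xV: "x \<in> G_verts n" and yV: "y \<in> G_verts n" and e: "G_adj n x y"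
  obtain a b where x: "x = (a,b)" "b \<le> n" using xV unfolding G_verts_def stable_def by auto
  obtain a' b' where y: "y = (a',b')" "b' \<le> n" using yV unfolding G_verts_def stable_def by auto
  have "x \<noteq> y" using e unfolding G_adj_def cross_def by auto
  show "(case x of (a, b) \<Rightarrow> a * (n + 1) + b) \<noteq> (case y of (a, b) \<Rightarrow> a * (n + 1) + b)"
  proof
    assume eq: "(case x of (a, b) \<Rightarrow> a * (n + 1) + b) = (case y of (a, b) \<Rightarrow> a * (n + 1) + b)"
    then have eq': "a * (n + 1) + b = a' * (n + 1) + b'" using x y by simp
    have "(b + a * (n + 1)) mod (n+1) = b" "(b' + a' * (n + 1)) mod (n+1) = b'" using x y
      by (simp_all only: mod_mult_self1 mod_less le_imp_less_Suc Suc_eq_plus1[symmetric])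
    then have "(a * (n + 1) + b) mod (n+1) = b" "(a' * (n + 1) + b') mod (n+1) = b'"
      by (simp_all only: add.commute)
    then have "b = b'" using eq' by simp
    then have "a * (n+1) = a' * (n+1)" using eq' by simp
    then have "a = a'" using mult_right_cancel[of "n+1" a a'] by linarith
    then show False using \<open>x \<noteq> y\<close> x y \<open>b = b'\<close> by simp
  qed
qed

theorem lemma3:
  fixes n :: nat
  assumes "n \<ge> 5"
  shows "(\<exists>h. graph_hom (myc_verts (G_verts (n - 1))) (myc_adj (G_adj (n - 1)))
                          (G_verts n) (G_adj n) h)
         \<and> n - 2 \<le> chromatic_number (G_verts n) (G_adj n)"
proof
  show "\<exists>h. graph_hom (myc_verts (G_verts (n - 1))) (myc_adj (G_adj (n - 1)))
                          (G_verts n) (G_adj n) h" using hom[OF assms] by blast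
next
  have "\<exists>c. proper_colouring (G_verts n) (G_adj n) (chromatic_number (G_verts n) (G_adj n)) c"
    unfolding chromatic_number_def by (rule LeastI_ex) (use ex_col in blast)
  then obtain c where "proper_colouring (G_verts n) (G_adj n) (chromatic_number (G_verts n) (G_adj n)) c" by blast
  from main_col[OF _ this] assms show "n - 2 \<le> chromatic_number (G_verts n) (G_adj n)" by simp
qed

end
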